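(* Let $\lambda>0$, $K(\lambda, z) = \left(\frac{\cos \pi z}{\pi}\right)\sum_{n \in \mathbb{Z}} \frac{ (-1)^{n}\, e^{-\lambda|n- \frac{1}{2}|}}{z - n + \frac{1}{2}}$, and $\widehat{K}(\lambda,t)=\int_{-\infty}^\infty K(\lambda,x)e(-tx)\,\mathrm{d}x$ for $t\in\mathbb{R}$. Then for $|t|\le\frac12$, $$\widehat{K}(\lambda,t)=\frac{\sinh(\frac{\lambda}{2})\cos\pi t}{\sinh^2(\frac{\lambda}{2})+\sin^2\pi t},$$ and $\widehat{K}(\lambda,t)\ge 0$ for all $t\in\mathbb{R}$.
   Context: $e(z)=e^{2\pi iz}$. The function $x\mapsto K(\lambda,x)$ is integrable on $\mathbb{R}$, and $\widehat K(\lambda,\cdot)$ is continuous and supported in $[-\frac12,\frac12]$. *)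

theory Defs
  imports "HOL-Analysis.Analysis"
begin

definition e :: "complex \<Rightarrow> complex" where
  "e z = exp (2 * complex_of_real pi * \<i> * z)"

definition K :: "real \<Rightarrow> real \<Rightarrow> real" where
  "K lam x = (cos (pi * x) / pi) *
     (\<Sum>\<^sub>\<infinity> n \<in> (UNIV :: int set).
        ((-1) powi n) * exp (- lam * \<bar>real_of_int n - 1/2\<bar>) / (x - real_of_int n + 1/2))"

definition Khat :: "real \<Rightarrow> real \<Rightarrow> complex" where
  "Khat lam t = (LINT x|lborel. complex_of_real (K lam x) * e (complex_of_real (- t * x)))"

end

theory Submission
  imports Defs "HOL-Probability.Probability"
begin

lemma geom_cos:
  fixes r b :: real
  assumes r: "0 \<le> r" "r < 1"
  shows "(\<lambda>k. r^(2*k+1) * cos ((2*real k+1)*b)) sums (r*(1-r^2)*cos b / (1 - 2*r^2*cos(2*b) + r^4))"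
proof -
  define z where "z = complex_of_real r * cis b"
  have nz: "norm (z^2) < 1" using r by (simp add: z_def norm_mult norm_power abs_of_nonneg power_less_one_iff)
  have "(\<lambda>k. z * (z^2)^k) sums (z * (1 / (1 - z^2)))"
    by (intro sums_mult geometric_sums nz)
  then have S: "(\<lambda>k. Re (z * (z^2)^k)) sums Re (z * (1 / (1 - z^2)))"
    by (rule sums_Re)
  have E0: "Re (z * (z^2)^k) = r^(2*k+1) * cos ((2*real k+1)*b)" for k
  proof -
    have "z * (z^2)^k = z^(2*k+1)" by (simp add: power_mult[symmetric] mult.commute)
    also have "\<dots> = complex_of_real (r^(2*k+1)) * cis (real (2*k+1) * b)"
    proof -
      have "cis b ^ (2*k+1) = cis (real (2*k+1)*b)" by (rule Complex.DeMoivre)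
      then show ?thesis by (simp add: z_def power_mult_distrib)
    qed
    finally show ?thesis by (simp add: add.commute)
  qed
  have E1: "(\<lambda>k. Re (z * (z^2)^k)) = (\<lambda>k. r^(2*k+1) * cos ((2*real k+1)*b))"
    by (rule ext) (rule E0)
  have E2: "Re (z * (1 / (1 - z^2))) = r*(1-r^2)*cos b / (1 - 2*r^2*cos(2*b) + r^4)"
  proof -
    have d: "(1 - r^2*cos(2*b))^2 + (r^2 * sin (2*b))^2 = 1 - 2*r^2*cos(2*b) + r^4"
    proof -
      have "(cos(2*b))^2 + (sin(2*b))^2 = 1" by simp
      then show ?thesis by algebra
    qed
    have "cis b ^ 2 = cis (real 2 * b)" by (rule Complex.DeMoivre)
    then have "z^2 = complex_of_real (r^2) * cis (2*b)" by (simp add: z_def power_mult_distrib)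
    then have "Re (z * (1 / (1 - z^2))) = (r * cos b * (1 - r^2*cos(2*b)) - r * sin b * (r^2 * sin (2*b))) / ((1 - r^2*cos(2*b))^2 + (r^2 * sin (2*b))^2)"
      by (simp add: Re_divide z_def)
    also have "r * cos b * (1 - r^2*cos(2*b)) - r * sin b * (r^2 * sin (2*b)) = r*(1-r^2)*cos b"
    proof -
      have "(cos b)^2 + (sin b)^2 = 1" by simp
      then show ?thesis unfolding cos_double sin_double by algebra
    qed
    finally show ?thesis using d by simp
  qed
  show ?thesis using S unfolding E1 E2 .
qed

definition FF :: "real \<Rightarrow> real \<Rightarrow> real" where
  "FF lam s = sinh (lam/2) * cos (pi * s) / ((sinh (lam/2))^2 + (sin (pi * s))^2)"

lemma FF_sums:
  assumes lam: "lam > 0"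
  shows "(\<lambda>k. 2 * exp (- lam * (real k + 1/2)) * cos (2 * pi * (real k + 1/2) * s)) sums FF lam s"
proof -
  define r where "r = exp (- lam / 2)"
  have r: "0 \<le> r" "r < 1" using lam by (auto simp: r_def)
  have rp: "r > 0" by (simp add: r_def)
  have S: "(\<lambda>k. r^(2*k+1) * cos ((2*real k+1)*(pi* s))) sums (r*(1-r^2)*cos (pi* s) / (1 - 2*r^2*cos(2*(pi* s)) + r^4))"
    by (rule geom_cos[OF r])
  have t1: "r^(2*k+1) = exp (- lam * (real k + 1/2))" for k
  proof -
    have "r^(2*k+1) = exp (real (2*k+1) * (- lam/2))" unfolding r_def by (rule exp_of_nat_mult[symmetric])
    also have "real (2*k+1) * (- lam/2) = - lam * (real k + 1/2)" by (simp add: algebra_simps)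
    finally show ?thesis .
  qed
  have t2: "(2*real k+1)*(pi* s) = 2 * pi * (real k + 1/2) * s" for k by (simp add: algebra_simps)
  have S2: "(\<lambda>k. 2 * (r^(2*k+1) * cos ((2*real k+1)*(pi* s)))) sums (2 * (r*(1-r^2)*cos (pi* s) / (1 - 2*r^2*cos(2*(pi* s)) + r^4)))"
    by (intro sums_mult S)
  have val: "2 * (r*(1-r^2)*cos (pi* s) / (1 - 2*r^2*cos(2*(pi* s)) + r^4)) = FF lam s"
  proof -
    have sh: "sinh (lam/2) = (1 - r^2) / (2*r)"
    proof -
      have "exp (lam/2) = 1 / r" using rp by (simp add: r_def exp_minus field_simps)
      then show ?thesis using rp by (simp add: sinh_def r_def exp_minus field_simps power2_eq_square)
    qed
    have cs: "cos (2*(pi* s)) = 1 - 2 * (sin (pi* s))^2" by (rule cos_double_sin)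
    have den: "1 - 2*r^2*cos(2*(pi* s)) + r^4 = (1 - r^2)^2 + 4*r^2*(sin (pi* s))^2"
      unfolding cs by (simp add: algebra_simps power2_eq_square power4_eq_xxxx)
    have pos: "(1 - r^2)^2 + 4*r^2*(sin (pi* s))^2 > 0"
      using r rp by (smt (verit) power2_less_eq_zero_iff power_less_one_iff zero_le_power2 mult_nonneg_nonneg)
    have "(sinh (lam/2))^2 + (sin (pi* s))^2 = ((1 - r^2)^2 + 4*r^2*(sin (pi* s))^2) / (4*r^2)"
      unfolding sh using rp by (simp add: field_simps power2_eq_square)
    then have "FF lam s = ((1 - r^2) / (2*r)) * cos (pi* s) / (((1 - r^2)^2 + 4*r^2*(sin (pi* s))^2) / (4*r^2))"
      unfolding FF_def sh by simp
    also have "\<dots> = 2 * (r*(1-r^2)*cos (pi* s) / ((1 - r^2)^2 + 4*r^2*(sin (pi* s))^2))"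
    proof -
      have gen: "((1 - r^2) / (2*r)) * c / (D / (4*r^2)) = 2 * (r*(1-r^2)*c / D)" if "D > 0" for D c
        using that rp by (simp add: field_simps power2_eq_square)
      show ?thesis by (rule gen[OF pos])
    qed
    finally show ?thesis unfolding den by simp
  qed
  show ?thesis using S2 unfolding t1 t2 val by (simp add: mult.assoc)
qed

lemma iexp_Complex: "iexp t = Complex (cos t) (sin t)"
  by (simp add: cis_conv_exp[symmetric] cis.ctr)

lemma iexp_integral:
  fixes y :: real
  assumes y: "y \<noteq> 0"
  shows "((\<lambda>s. iexp (2 * pi * s * y)) has_integral complex_of_real (sin (pi*y) / (pi*y))) {-1/2..1/2}"
proof -
  define w where "w = 2 * pi * y"
  have w: "w \<noteq> 0" using y by (simp add: w_def)
  define P where "P s = Complex (sin (w * s) / w) (- cos (w * s) / w)" for s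
  have d: "(P has_vector_derivative iexp (2 * pi * s * y)) (at s within {-1/2..1/2})" for s
    unfolding P_def iexp_Complex has_vector_derivative_complex_iff using w
    by (auto intro!: derivative_eq_intros simp: w_def field_simps)
  have "((\<lambda>s. iexp (2 * pi * s * y)) has_integral P (1/2) - P (-1/2)) {-1/2..1/2}"
    by (intro fundamental_theorem_of_calculus d) auto
  moreover have "P (1/2) - P (-1/2) = complex_of_real (sin (pi*y) / (pi*y))"
    unfolding P_def using y
    by (simp add: complex_eq_iff w_def field_simps)
  ultimately show ?thesis by simp
qed


definition sncf :: "real \<Rightarrow> real" where "sncf y = sin (pi * y) / (pi * y)"

lemma abs_sncf: "\<bar>sncf y\<bar> \<le> 1"
proof (cases "y = 0")
  case True then show ?thesis by (simp add: sncf_def)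
next
  case False
  have "\<bar>sin (pi*y)\<bar> \<le> \<bar>pi*y\<bar>" by (rule abs_sin_x_le_abs_x)
  then show ?thesis using False by (simp add: sncf_def abs_divide divide_le_eq_1)
qed

lemma has_sum_int_split:
  fixes g :: "int \<Rightarrow> real"
  assumes s1: "summable (\<lambda>k. norm (g (int k + 1)))" and s2: "summable (\<lambda>k. norm (g (- int k)))"
  shows "(g has_sum (\<Sum>k. g (int k + 1) + g (- int k))) UNIV"
proof -
  have h1: "((\<lambda>k. g (int k + 1)) has_sum (\<Sum>k. g (int k + 1))) UNIV"
    by (rule norm_summable_imp_has_sum[OF s1]) (rule summable_sums[OF summable_norm_cancel[OF s1]])
  have h2: "((\<lambda>k. g (- int k)) has_sum (\<Sum>k. g (- int k))) UNIV"
    by (rule norm_summable_imp_has_sum[OF s2]) (rule summable_sums[OF summable_norm_cancel[OF s2]])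
  have i1: "inj (\<lambda>k::nat. int k + 1)" by (auto simp: inj_def)
  have i2: "inj (\<lambda>k::nat. - int k)" by (auto simp: inj_def)
  have H1: "(g has_sum (\<Sum>k. g (int k + 1))) (range (\<lambda>k::nat. int k + 1))"
    using has_sum_reindex[OF i1, of g] h1 by (simp add: comp_def)
  have H2: "(g has_sum (\<Sum>k. g (- int k))) (range (\<lambda>k::nat. - int k))"
    using has_sum_reindex[OF i2, of g] h2 by (simp add: comp_def)
  have dj: "range (\<lambda>k::nat. int k + 1) \<inter> range (\<lambda>k::nat. - int k) = {}"
    by auto
  have U: "range (\<lambda>k::nat. int k + 1) \<union> range (\<lambda>k::nat. - int k) = UNIV"
  proof -
    have "n \<in> range (\<lambda>k::nat. int k + 1) \<union> range (\<lambda>k::nat. - int k)" for n :: int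
    proof (cases "n \<ge> 1")
      case True then have "n = int (nat (n - 1)) + 1" by simp
      then show ?thesis by blast
    next
      case False then have "n = - int (nat (- n))" by simp
      then show ?thesis by blast
    qed
    then show ?thesis by blast
  qed
  have "(g has_sum ((\<Sum>k. g (int k + 1)) + (\<Sum>k. g (- int k)))) UNIV"
    using has_sum_Un_disjoint[OF H1 H2 dj] unfolding U .
  moreover have "(\<Sum>k. g (int k + 1)) + (\<Sum>k. g (- int k)) = (\<Sum>k. g (int k + 1) + g (- int k))"
    by (rule suminf_add[OF summable_norm_cancel[OF s1] summable_norm_cancel[OF s2]])
  ultimately show ?thesis by simp
qed

lemma K_sums:
  assumes lam: "lam > 0" and c: "cos (pi * x) \<noteq> 0"
  shows "(\<lambda>k. exp (- lam * (real k + 1/2)) * (sncf (x - (real k + 1/2)) + sncf (x + (real k + 1/2)))) sums K lam x"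
proof -
  define g where "g n = ((-1) powi n) * exp (- lam * \<bar>real_of_int n - 1/2\<bar>) / (x - real_of_int n + 1/2)" for n :: int
  have Kd: "K lam x = (cos (pi * x) / pi) * infsum g UNIV" unfolding K_def g_def by simp
  have g1: "cos (pi * x) / pi * g (int k + 1) = exp (- lam * (real k + 1/2)) * sncf (x - (real k + 1/2))" for k
  proof -
    have a: "\<bar>real_of_int (int k + 1) - 1/2\<bar> = real k + 1/2" by simp
    have b: "x - real_of_int (int k + 1) + 1/2 = x - (real k + 1/2)" by simp
    have p: "((-1::real) powi (int k + 1)) = - ((-1) ^ k)"
      by (simp add: power_int_add)
    have sn: "sin (pi * (x - (real k + 1/2))) = - ((-1)^k * cos (pi * x))"
      by (simp add: sin_diff cos_diff sin_add cos_add algebra_simps)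
    show ?thesis unfolding g_def a b p sncf_def sn by (simp add: field_simps)
  qed
  have g2: "cos (pi * x) / pi * g (- int k) = exp (- lam * (real k + 1/2)) * sncf (x + (real k + 1/2))" for k
  proof -
    have a: "\<bar>real_of_int (- int k) - 1/2\<bar> = real k + 1/2" by simp
    have b: "x - real_of_int (- int k) + 1/2 = x + (real k + 1/2)" by simp
    have p: "((-1::real) powi (- int k)) = (-1) ^ k"
      by (simp add: power_int_minus_one_minus)
    have sn: "sin (pi * (x + (real k + 1/2))) = (-1)^k * cos (pi * x)"
      by (simp add: sin_diff cos_diff sin_add cos_add algebra_simps)
    show ?thesis unfolding g_def a b p sncf_def sn by (simp add: field_simps)
  qed
  have cpos: "\<bar>cos (pi * x) / pi\<bar> > 0" using c by simp
  have sg: "summable (\<lambda>k. exp (- lam * (real k + 1/2)))"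
  proof -
    have "exp (- lam * (real k + 1/2)) = exp (-lam/2) * exp (-lam) ^ k" for k
      by (simp add: exp_of_nat_mult[symmetric] exp_add[symmetric] algebra_simps)
    then show ?thesis using lam by (simp add: summable_geometric summable_mult)
  qed
  have bnd: "norm (g n) \<le> exp (- lam * (real k + 1/2)) / \<bar>cos (pi * x) / pi\<bar>"
    if "cos (pi * x) / pi * g n = exp (- lam * (real k + 1/2)) * sncf y" for n k y
  proof -
    have "\<bar>cos (pi * x) / pi\<bar> * \<bar>g n\<bar> = exp (- lam * (real k + 1/2)) * \<bar>sncf y\<bar>"
      using arg_cong[OF that, of abs] by (simp add: abs_mult)
    also have "\<dots> \<le> exp (- lam * (real k + 1/2))" using abs_sncf[of y] by simp
    finally show ?thesis using cpos by (simp add: field_simps)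
  qed
  have s1: "summable (\<lambda>k. norm (g (int k + 1)))"
  proof (rule summable_comparison_test[OF _ summable_divide[OF sg, of "\<bar>cos (pi * x) / pi\<bar>"]])
    show "\<exists>N. \<forall>k\<ge>N. norm (norm (g (int k + 1))) \<le> exp (- lam * (real k + 1/2)) / \<bar>cos (pi * x) / pi\<bar>"
      using bnd[OF g1] by auto
  qed
  have s2: "summable (\<lambda>k. norm (g (- int k)))"
  proof (rule summable_comparison_test[OF _ summable_divide[OF sg, of "\<bar>cos (pi * x) / pi\<bar>"]])
    show "\<exists>N. \<forall>k\<ge>N. norm (norm (g (- int k))) \<le> exp (- lam * (real k + 1/2)) / \<bar>cos (pi * x) / pi\<bar>"
      using bnd[OF g2] by auto
  qed
  have "(g has_sum (\<Sum>k. g (int k + 1) + g (- int k))) UNIV" by (rule has_sum_int_split[OF s1 s2])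
  then have "infsum g UNIV = (\<Sum>k. g (int k + 1) + g (- int k))" by (rule infsumI)
  moreover have "(\<lambda>k. g (int k + 1) + g (- int k)) sums (\<Sum>k. g (int k + 1) + g (- int k))"
    using summable_add[OF summable_norm_cancel[OF s1] summable_norm_cancel[OF s2]] by (rule summable_sums)
  ultimately have "(\<lambda>k. cos (pi * x) / pi * (g (int k + 1) + g (- int k))) sums K lam x"
    unfolding Kd by (intro sums_mult) simp
  then show ?thesis unfolding distrib_left g1 g2 .
qed


definition GG :: "real \<Rightarrow> real \<Rightarrow> complex" where
  "GG lam x = (LINT s:{-1/2..1/2}|lborel. complex_of_real (FF lam s) * iexp (2 * pi * s * x))"

lemma FF_den_pos: "lam > 0 \<Longrightarrow> (sinh (lam/2))^2 + (sin (pi * s))^2 > 0"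
  by (simp add: add_pos_nonneg)

lemma FF_cont: "lam > 0 \<Longrightarrow> continuous_on A (FF lam)"
  unfolding FF_def using FF_den_pos by (auto intro!: continuous_intros simp: add_pos_nonneg)

lemma set_integrable_I:
  assumes "continuous_on {-1/2..1/2::real} f"
  shows "set_integrable lborel {-1/2..1/2} (f :: real \<Rightarrow> complex)"
  unfolding set_integrable_def by (rule borel_integrable_compact[OF compact_Icc assms])

lemma cos_mult_iexp:
  "complex_of_real (2 * cos a) * iexp b = iexp (b + a) + iexp (b - a)"
  unfolding iexp_Complex by (simp add: complex_eq_iff cos_add cos_diff sin_add sin_diff)

lemma term_integral:
  assumes lam: "lam > 0" and c: "cos (pi * x) \<noteq> 0"
  shows "(LINT s:{-1/2..1/2}|lborel. complex_of_real (2 * exp (- lam * (real k + 1/2)) * cos (2 * pi * (real k + 1/2) * s)) * iexp (2 * pi * s * x))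
    = complex_of_real (exp (- lam * (real k + 1/2)) * (sncf (x - (real k + 1/2)) + sncf (x + (real k + 1/2))))"
proof -
  define m where "m = real k + 1/2"
  define E where "E = exp (- lam * m)"
  have nz1: "x + m \<noteq> 0"
  proof
    assume "x + m = 0"
    then have xe: "x = - (real k + 1/2)" unfolding m_def by linarith
    have px: "pi * x = - (pi * real k + pi / 2)" by (simp only: xe) (simp add: algebra_simps)
    have "cos (pi * x) = cos (pi * real k + pi / 2)" unfolding px by (simp only: cos_minus)
    also have "\<dots> = 0" by (simp only: cos_add) simp
    finally have "cos (pi * x) = 0" .
    with c show False by simp
  qed
  have nz2: "x - m \<noteq> 0"
  proof
    assume "x - m = 0"
    then have "pi * x = pi * real k + pi / 2" by (simp add: m_def algebra_simps)
    then have "cos (pi * x) = cos (pi * real k + pi / 2)" by simp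
    also have "\<dots> = 0" by (simp only: cos_add) simp
    finally have "cos (pi * x) = 0" .
    with c show False by simp
  qed
  have eq: "complex_of_real (2 * E * cos (2 * pi * m * s)) * iexp (2 * pi * s * x)
      = E * (iexp (2 * pi * s * (x + m)) + iexp (2 * pi * s * (x - m)))" for s
  proof -
    have "complex_of_real (2 * E * cos (2 * pi * m * s)) * iexp (2 * pi * s * x) =
      E * (complex_of_real (2 * cos (2 * pi * m * s)) * iexp (2 * pi * s * x))" by simp
    also have "\<dots> = E * (iexp (2 * pi * s * x + 2 * pi * m * s) + iexp (2 * pi * s * x - 2 * pi * m * s))"
      by (simp only: cos_mult_iexp)
    also have "2 * pi * s * x + 2 * pi * m * s = 2 * pi * s * (x + m)" by (simp add: algebra_simps)
    also have "2 * pi * s * x - 2 * pi * m * s = 2 * pi * s * (x - m)" by (simp add: algebra_simps)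
    finally show ?thesis .
  qed
  have hi: "((\<lambda>s. complex_of_real (2 * E * cos (2 * pi * m * s)) * iexp (2 * pi * s * x)) has_integral
      E * (complex_of_real (sncf (x + m)) + complex_of_real (sncf (x - m)))) {-1/2..1/2}"
    unfolding eq sncf_def
    by (intro has_integral_mult_right has_integral_add iexp_integral nz1 nz2)
  have si: "set_integrable lborel {-1/2..1/2} (\<lambda>s. complex_of_real (2 * E * cos (2 * pi * m * s)) * iexp (2 * pi * s * x))"
    by (intro set_integrable_I continuous_intros)
  have "(LINT s:{-1/2..1/2}|lborel. complex_of_real (2 * E * cos (2 * pi * m * s)) * iexp (2 * pi * s * x))
      = E * (complex_of_real (sncf (x + m)) + complex_of_real (sncf (x - m)))"
    using set_borel_integral_eq_integral(2)[OF si] integral_unique[OF hi] by simp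
  then show ?thesis unfolding m_def[symmetric] E_def[symmetric] by (simp add: algebra_simps)
qed

lemma GG_eq_K:
  assumes lam: "lam > 0" and c: "cos (pi * x) \<noteq> 0"
  shows "GG lam x = complex_of_real (K lam x)"
proof -
  define t where "t k s = 2 * exp (- lam * (real k + 1/2)) * cos (2 * pi * (real k + 1/2) * s)" for k s
  define f where "f k s = indicator {-1/2..1/2::real} s *\<^sub>R (complex_of_real (t k s) * iexp (2 * pi * s * x))" for k s
  define E where "E k = exp (- lam * (real k + 1/2))" for k :: nat
  have sE: "summable E"
  proof -
    have "E = (\<lambda>k. exp (-lam/2) * exp (-lam) ^ k)"
      by (rule ext) (simp add: E_def exp_of_nat_mult[symmetric] exp_add[symmetric] algebra_simps)
    moreover have "summable (\<lambda>k. exp (-lam/2) * exp (-lam) ^ k)"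
      using lam by (intro summable_mult summable_geometric) simp
    ultimately show ?thesis by simp
  qed
  have tb: "\<bar>t k s\<bar> \<le> 2 * E k" for k s
    unfolding t_def E_def by (simp add: abs_mult)
  have fb: "norm (f k s) \<le> indicator {-1/2..1/2::real} s * (2 * E k)" for k s
    using tb[of k s] by (auto simp: f_def indicator_def norm_mult)
  have int: "integrable lborel (f k)" for k
  proof -
    have "continuous_on {-1/2..1/2} (\<lambda>s. complex_of_real (t k s) * iexp (2 * pi * s * x))"
      unfolding t_def by (intro continuous_intros)
    from set_integrable_I[OF this] show ?thesis unfolding f_def set_integrable_def .
  qed
  have summ: "AE s in lborel. summable (\<lambda>k. norm (f k s))"
    by (intro AE_I2 summable_comparison_test[OF _ summable_mult[OF sE, of 2]])
       (auto intro!: exI[of _ 0] order_trans[OF fb] simp: indicator_def mult.commute E_def)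
  have ib: "(\<integral>s. norm (f k s) \<partial>lborel) \<le> 2 * E k" for k
  proof -
    have "(\<integral>s. norm (f k s) \<partial>lborel) \<le> (\<integral>s. indicator {-1/2..1/2::real} s * (2 * E k) \<partial>lborel)"
      using fb[of k] by (intro integral_mono') (auto simp: E_def)
    also have "\<dots> = 2 * E k" by simp
    finally show ?thesis .
  qed
  have summI: "summable (\<lambda>k. \<integral>s. norm (f k s) \<partial>lborel)"
    by (rule summable_comparison_test[OF _ summable_mult[OF sE, of 2]])
       (use ib in \<open>auto intro!: exI[of _ 0] simp: mult.commute\<close>)
  have S: "(\<lambda>k. integral\<^sup>L lborel (f k)) sums (\<integral>s. (\<Sum>k. f k s) \<partial>lborel)"
    by (rule sums_integral[OF int summ summI])
  have pt: "(\<Sum>k. f k s) = indicator {-1/2..1/2} s *\<^sub>R (complex_of_real (FF lam s) * iexp (2 * pi * s * x))" for s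
  proof -
    have "(\<lambda>k. complex_of_real (t k s)) sums complex_of_real (FF lam s)"
      unfolding t_def by (rule sums_of_real[OF FF_sums[OF lam]])
    then have "(\<lambda>k. complex_of_real (t k s) * iexp (2 * pi * s * x)) sums (complex_of_real (FF lam s) * iexp (2 * pi * s * x))"
      by (rule sums_mult2)
    then have "(\<lambda>k. f k s) sums (indicator {-1/2..1/2} s *\<^sub>R (complex_of_real (FF lam s) * iexp (2 * pi * s * x)))"
      unfolding f_def by (cases "s \<in> {-1/2..1/2::real}") auto
    then show ?thesis by (rule sums_unique[symmetric])
  qed
  have "(\<integral>s. (\<Sum>k. f k s) \<partial>lborel) = GG lam x"
    unfolding GG_def set_lebesgue_integral_def pt ..
  moreover have "integral\<^sup>L lborel (f k) = complex_of_real (exp (- lam * (real k + 1/2)) * (sncf (x - (real k + 1/2)) + sncf (x + (real k + 1/2))))" for k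
    using term_integral[OF lam c, of k] unfolding f_def t_def set_lebesgue_integral_def .
  ultimately have "(\<lambda>k. complex_of_real (exp (- lam * (real k + 1/2)) * (sncf (x - (real k + 1/2)) + sncf (x + (real k + 1/2))))) sums GG lam x"
    using S by simp
  moreover have "(\<lambda>k. complex_of_real (exp (- lam * (real k + 1/2)) * (sncf (x - (real k + 1/2)) + sncf (x + (real k + 1/2))))) sums complex_of_real (K lam x)"
    by (rule sums_of_real[OF K_sums[OF lam c]])
  ultimately show ?thesis by (rule sums_unique2)
qed


definition DD :: "real \<Rightarrow> real \<Rightarrow> real" where
  "DD lam s = (sinh (lam/2))^2 + (sin (pi * s))^2"
definition NN :: "real \<Rightarrow> real \<Rightarrow> real" where
  "NN lam s = - pi * sinh (lam/2) * sin (pi * s) * DD lam s - 2 * pi * sinh (lam/2) * cos (pi * s) * sin (pi * s) * cos (pi * s)"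
definition F1 :: "real \<Rightarrow> real \<Rightarrow> real" where
  "F1 lam s = NN lam s / (DD lam s)^2"
definition D1 :: "real \<Rightarrow> real \<Rightarrow> real" where
  "D1 lam s = 2 * sin (pi * s) * cos (pi * s) * pi"
definition N1 :: "real \<Rightarrow> real \<Rightarrow> real" where
  "N1 lam s = - pi * pi * sinh (lam/2) * cos (pi * s) * DD lam s - pi * sinh (lam/2) * sin (pi * s) * D1 lam s
     - 2 * pi * sinh (lam/2) * (pi * (cos (pi * s))^3 - 2 * pi * cos (pi * s) * (sin (pi * s))^2)"
definition F2 :: "real \<Rightarrow> real \<Rightarrow> real" where
  "F2 lam s = (N1 lam s * DD lam s - 2 * NN lam s * D1 lam s) / (DD lam s)^3"

lemma DD_pos: "lam > 0 \<Longrightarrow> DD lam s > 0"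
  unfolding DD_def by (simp add: add_pos_nonneg)

lemma DD_deriv: "(DD lam has_real_derivative D1 lam s) (at s within X)"
  unfolding DD_def D1_def by (auto intro!: derivative_eq_intros simp: power2_eq_square)

lemma NN_deriv: "(NN lam has_real_derivative N1 lam s) (at s within X)"
  unfolding NN_def N1_def
  by (auto intro!: derivative_eq_intros DD_deriv simp: power2_eq_square power3_eq_cube algebra_simps)

lemma FF_deriv:
  assumes "lam > 0"
  shows "(FF lam has_real_derivative F1 lam s) (at s within X)"
proof -
  have e: "FF lam = (\<lambda>s. sinh (lam/2) * cos (pi * s) / DD lam s)" by (rule ext) (simp add: FF_def DD_def)
  show ?thesis unfolding e F1_def
    using DD_pos[OF assms, of s]
    by (auto intro!: derivative_eq_intros DD_deriv simp: NN_def D1_def field_simps power2_eq_square)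
qed

lemma F1_deriv:
  assumes "lam > 0"
  shows "(F1 lam has_real_derivative F2 lam s) (at s within X)"
proof -
  have e: "F1 lam = (\<lambda>s. NN lam s / (DD lam s)^2)" by (rule ext) (simp add: F1_def)
  show ?thesis unfolding e F2_def
    using DD_pos[OF assms, of s]
    by (auto intro!: derivative_eq_intros DD_deriv NN_deriv simp: field_simps power2_eq_square power3_eq_cube)
qed

lemma F2_cont: "lam > 0 \<Longrightarrow> continuous_on A (F2 lam)"
  unfolding F2_def N1_def NN_def DD_def D1_def
  using DD_pos unfolding DD_def
  by (auto intro!: continuous_intros)



lemma FF_half: "FF lam (1/2) = 0" "FF lam (-1/2) = 0" "FF lam (-(1/2)) = 0"
  by (simp_all add: FF_def)

lemma GG_integral:
  assumes lam: "lam > 0"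
  shows "((\<lambda>s. complex_of_real (FF lam s) * iexp (2 * pi * s * x)) has_integral GG lam x) {-1/2..1/2}"
proof -
  have si: "set_integrable lborel {-1/2..1/2} (\<lambda>s. complex_of_real (FF lam s) * iexp (2 * pi * s * x))"
    by (intro set_integrable_I continuous_intros FF_cont[OF lam])
  show ?thesis using set_borel_integral_eq_integral[OF si] unfolding GG_def
    by (simp add: integrable_integral)
qed

lemma GG_decay_eq:
  assumes lam: "lam > 0" and x: "x \<noteq> 0"
  shows "GG lam x = (complex_of_real (F1 lam (1/2)) * iexp (pi * x) - complex_of_real (F1 lam (-1/2)) * iexp (- pi * x)) / (2 * pi * x)^2
     - integral {-1/2..1/2} (\<lambda>s. complex_of_real (F2 lam s) * iexp (2 * pi * s * x)) / (2 * pi * x)^2"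
proof -
  define w where "w = 2 * pi * x"
  have w: "w \<noteq> 0" using x by (simp add: w_def)
  define H where "H s = Complex (FF lam s * sin (w * s) / w + F1 lam s * cos (w * s) / w^2)
                              (- FF lam s * cos (w * s) / w + F1 lam s * sin (w * s) / w^2)" for s
  define h where "h s = complex_of_real (FF lam s) * iexp (2 * pi * s * x) + complex_of_real (F2 lam s) * iexp (2 * pi * s * x) / w^2" for s
  have d: "(H has_vector_derivative h s) (at s within {-1/2..1/2})" for s
    unfolding H_def h_def iexp_Complex has_vector_derivative_complex_iff using w
    by (auto intro!: derivative_eq_intros FF_deriv[OF lam] F1_deriv[OF lam]
      simp: w_def field_simps power2_eq_square)
  have hi: "(h has_integral H (1/2) - H (-1/2)) {-1/2..1/2}"
    by (intro fundamental_theorem_of_calculus d) auto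
  have i2: "(\<lambda>s. complex_of_real (F2 lam s) * iexp (2 * pi * s * x)) integrable_on {-1/2..1/2}"
    by (intro integrable_continuous_interval continuous_intros F2_cont[OF lam])
  have hi2: "((\<lambda>s. complex_of_real (F2 lam s) * iexp (2 * pi * s * x) / w^2) has_integral
       integral {-1/2..1/2} (\<lambda>s. complex_of_real (F2 lam s) * iexp (2 * pi * s * x)) / w^2) {-1/2..1/2}"
    by (intro has_integral_divide integrable_integral i2)
  have "((\<lambda>s. h s - complex_of_real (F2 lam s) * iexp (2 * pi * s * x) / w^2) has_integral
      (H (1/2) - H (-1/2)) - integral {-1/2..1/2} (\<lambda>s. complex_of_real (F2 lam s) * iexp (2 * pi * s * x)) / w^2) {-1/2..1/2}"
    by (intro has_integral_diff hi hi2)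
  then have "((\<lambda>s. complex_of_real (FF lam s) * iexp (2 * pi * s * x)) has_integral
      (H (1/2) - H (-1/2)) - integral {-1/2..1/2} (\<lambda>s. complex_of_real (F2 lam s) * iexp (2 * pi * s * x)) / w^2) {-1/2..1/2}"
    unfolding h_def by simp
  then have "GG lam x = (H (1/2) - H (-1/2)) - integral {-1/2..1/2} (\<lambda>s. complex_of_real (F2 lam s) * iexp (2 * pi * s * x)) / w^2"
    using GG_integral[OF lam, of x] by (rule has_integral_unique[rotated])
  moreover have "H (1/2) - H (-1/2) = (complex_of_real (F1 lam (1/2)) * iexp (pi * x) - complex_of_real (F1 lam (-1/2)) * iexp (- pi * x)) / w^2"
    unfolding H_def iexp_Complex using w
    by (simp add: FF_half complex_eq_iff w_def field_simps)
  ultimately show ?thesis unfolding w_def by simp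
qed

lemma GG_decay:
  assumes lam: "lam > 0"
  obtains C where "C \<ge> 0" "\<And>x. x \<noteq> 0 \<Longrightarrow> norm (GG lam x) \<le> C / x^2"
proof -
  have "bounded (F2 lam ` {-1/2..1/2})"
    by (rule compact_imp_bounded[OF compact_continuous_image[OF F2_cont[OF lam] compact_Icc]])
  then obtain M where M': "\<forall>y\<in>F2 lam ` {-1/2..1/2}. norm y \<le> M" unfolding bounded_iff by blast
  have M: "\<And>s. s \<in> {-1/2..1/2} \<Longrightarrow> norm (F2 lam s) \<le> M" using M' by blast
  have M0: "M \<ge> 0" using M[of 0] by simp
  define C where "C = (\<bar>F1 lam (1/2)\<bar> + \<bar>F1 lam (-1/2)\<bar> + M) / (2 * pi)^2"
  have "C \<ge> 0" using M0 by (simp add: C_def)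
  moreover have "norm (GG lam x) \<le> C / x^2" if x: "x \<noteq> 0" for x
  proof -
    have ib: "norm (integral {-1/2..1/2} (\<lambda>s. complex_of_real (F2 lam s) * iexp (2 * pi * s * x))) \<le> M * Henstock_Kurzweil_Integration.content (cbox (-1/2) (1/2::real))"
    proof (rule has_integral_bound[OF M0])
      show "((\<lambda>s. complex_of_real (F2 lam s) * iexp (2 * pi * s * x)) has_integral integral {-1/2..1/2} (\<lambda>s. complex_of_real (F2 lam s) * iexp (2 * pi * s * x))) (cbox (-1/2) (1/2))"
        by (auto intro!: integrable_integral integrable_continuous_interval continuous_intros F2_cont[OF lam])
      show "\<And>s. s\<in>cbox (- 1 / 2) (1 / 2) \<Longrightarrow> norm (complex_of_real (F2 lam s) * iexp (2 * pi * s * x)) \<le> M"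
        using M by (auto simp: norm_mult)
    qed
    then have ib': "norm (integral {-1/2..1/2} (\<lambda>s. complex_of_real (F2 lam s) * iexp (2 * pi * s * x))) \<le> M" by simp
    have "norm (GG lam x) \<le> norm ((complex_of_real (F1 lam (1/2)) * iexp (pi * x) - complex_of_real (F1 lam (-1/2)) * iexp (- pi * x)) / (2 * pi * x)^2)
       + norm (integral {-1/2..1/2} (\<lambda>s. complex_of_real (F2 lam s) * iexp (2 * pi * s * x)) / (2 * pi * x)^2)"
      unfolding GG_decay_eq[OF lam x] by (rule norm_triangle_ineq4)
    also have "\<dots> \<le> (\<bar>F1 lam (1/2)\<bar> + \<bar>F1 lam (-1/2)\<bar>) / (2 * pi * x)^2 + M / (2 * pi * x)^2"
    proof (rule add_mono)
      have nc: "(cmod (2 * complex_of_real pi * complex_of_real x))^2 = (2*pi*x)^2"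
        by (simp add: norm_mult power_mult_distrib)
      have "norm (complex_of_real (F1 lam (1/2)) * iexp (pi * x) - complex_of_real (F1 lam (-1/2)) * iexp (- pi * x))
          \<le> \<bar>F1 lam (1/2)\<bar> + \<bar>F1 lam (-1/2)\<bar>"
        by (rule order_trans[OF norm_triangle_ineq4]) (simp add: norm_mult)
      then show "norm ((complex_of_real (F1 lam (1/2)) * iexp (pi * x) - complex_of_real (F1 lam (-1/2)) * iexp (- pi * x)) / (2 * pi * x)^2)
          \<le> (\<bar>F1 lam (1/2)\<bar> + \<bar>F1 lam (-1/2)\<bar>) / (2 * pi * x)^2"
        by (simp add: norm_divide norm_power divide_right_mono nc)
      show "norm (integral {-1/2..1/2} (\<lambda>s. complex_of_real (F2 lam s) * iexp (2 * pi * s * x)) / (2 * pi * x)^2) \<le> M / (2 * pi * x)^2"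
        using ib' by (simp add: norm_divide norm_power divide_right_mono nc)
    qed
    also have "\<dots> = C / x^2" using x by (simp add: C_def field_simps power2_eq_square)
    finally show ?thesis .
  qed
  ultimately show ?thesis using that by blast
qed

lemma GG_bounded:
  assumes lam: "lam > 0"
  obtains B where "B \<ge> 0" "\<And>x. norm (GG lam x) \<le> B"
proof -
  have "bounded (FF lam ` {-1/2..1/2})"
    by (rule compact_imp_bounded[OF compact_continuous_image[OF FF_cont[OF lam] compact_Icc]])
  then obtain M where M': "\<forall>y\<in>FF lam ` {-1/2..1/2}. norm y \<le> M" unfolding bounded_iff by blast
  have M: "\<And>s. s \<in> {-1/2..1/2} \<Longrightarrow> norm (FF lam s) \<le> M" using M' by blast
  have M0: "M \<ge> 0" using M[of 0] by simp
  have "norm (GG lam x) \<le> M * Henstock_Kurzweil_Integration.content (cbox (-1/2) (1/2::real))" for x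
  proof (rule has_integral_bound[OF M0])
    show "((\<lambda>s. complex_of_real (FF lam s) * iexp (2 * pi * s * x)) has_integral GG lam x) (cbox (-1/2) (1/2))"
      using GG_integral[OF lam] by simp
    show "\<And>s. s\<in>cbox (- 1 / 2) (1 / 2) \<Longrightarrow> norm (complex_of_real (FF lam s) * iexp (2 * pi * s * x)) \<le> M"
      using M by (auto simp: norm_mult)
  qed
  then show ?thesis using that M0 by simp
qed


lemma FF_meas[measurable]: "FF lam \<in> borel_measurable borel"
  unfolding FF_def by measurable

lemma GG_meas[measurable]: "GG lam \<in> borel_measurable borel"
  unfolding GG_def set_lebesgue_integral_def by measurable

lemma cos_zero_countable: "countable {x::real. cos (pi * x) = 0}"
proof -
  have "{x::real. cos (pi * x) = 0} \<subseteq> range (\<lambda>i::int. of_int i / 2)"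
  proof
    fix x :: real assume "x \<in> {x. cos (pi * x) = 0}"
    then obtain i where "pi * x = of_int i * (pi/2)" using cos_zero_iff_int by auto
    then have "x = of_int i / 2" by (simp add: field_simps)
    then show "x \<in> range (\<lambda>i::int. of_int i / 2)" by blast
  qed
  then show ?thesis by (rule countable_subset) simp
qed

lemma K_alt:
  assumes lam: "lam > 0"
  shows "K lam = (\<lambda>x. if cos (pi * x) = 0 then 0 else Re (GG lam x))"
proof
  fix x
  show "K lam x = (if cos (pi * x) = 0 then 0 else Re (GG lam x))"
  proof (cases "cos (pi * x) = 0")
    case True then show ?thesis by (simp add: K_def)
  next
    case False then show ?thesis using GG_eq_K[OF lam False] by simp
  qed
qed

lemma K_meas: "lam > 0 \<Longrightarrow> K lam \<in> borel_measurable borel"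
  unfolding K_alt by measurable

lemma AE_GG_K: "lam > 0 \<Longrightarrow> AE x in lborel. GG lam x = complex_of_real (K lam x)"
proof -
  assume lam: "lam > 0"
  have "{x. cos (pi * x) = 0} \<in> null_sets lborel"
    by (rule countable_imp_null_set_lborel[OF cos_zero_countable])
  then show ?thesis
    by (rule AE_I') (auto intro: GG_eq_K[OF lam])
qed

lemma integrable_cauchy_half: "integrable lborel (\<lambda>x. indicator {0..} x / (1 + x^2) :: real)"
proof (rule integrableI_nn_integral_finite)
  show "(\<lambda>x. indicator {0..} x / (1 + x^2) :: real) \<in> borel_measurable lborel" by measurable
  show "AE x in lborel. 0 \<le> indicator {0..} x / (1 + x^2 :: real)" by auto
  have "(\<integral>\<^sup>+x. ennreal (1 / (1 + x^2)) * indicator {0..} x \<partial>lborel) = ennreal (pi/2 - arctan 0)"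
  proof (rule nn_integral_FTC_atLeast)
    show "(\<lambda>x. 1 / (1 + x^2 :: real)) \<in> borel_measurable borel" by measurable
    show "DERIV arctan x :> 1 / (1 + x^2)" for x
      by (auto intro!: derivative_eq_intros simp: power2_eq_square field_simps add_nonneg_eq_0_iff)
    show "0 \<le> 1 / (1 + x^2 :: real)" for x by simp
    show "(arctan \<longlongrightarrow> pi / 2) at_top" by (rule tendsto_arctan_at_top)
  qed
  also have "(\<integral>\<^sup>+x. ennreal (1 / (1 + x^2)) * indicator {0..} x \<partial>lborel) = (\<integral>\<^sup>+x. ennreal (indicator {0..} x / (1 + x^2)) \<partial>lborel)"
    by (intro nn_integral_cong) (auto split: split_indicator)
  finally show "(\<integral>\<^sup>+x. ennreal (indicator {0..} x / (1 + x^2)) \<partial>lborel) = ennreal (pi/2)" by simp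
qed

lemma integrable_cauchy2: "integrable lborel (\<lambda>x. indicator {0..} x / (1 + x^2) + indicator {0..} (-x) / (1 + (-x)^2) :: real)"
proof -
  have "integrable lborel (\<lambda>x. indicator {0..} (0 + (-1) * x) / (1 + (0 + (-1) * x)^2) :: real)"
    by (rule lborel_integrable_real_affine[OF integrable_cauchy_half]) simp
  then show ?thesis using integrable_cauchy_half by simp
qed

lemma GG_integrable:
  assumes lam: "lam > 0"
  shows "integrable lborel (GG lam)"
proof -
  obtain C where C: "C \<ge> 0" "\<And>x. x \<noteq> 0 \<Longrightarrow> norm (GG lam x) \<le> C / x^2" using GG_decay[OF lam] by blast
  obtain B where B: "B \<ge> 0" "\<And>x. norm (GG lam x) \<le> B" using GG_bounded[OF lam] by blast
  define w where "w x = (2*B + 2*C) * (indicator {0..} x / (1 + x^2) + indicator {0..} (-x) / (1 + (-x)^2))" for x :: real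
  have wi: "integrable lborel w" unfolding w_def by (intro integrable_mult_right integrable_cauchy2)
  have bnd: "norm (GG lam x) \<le> norm (w x)" for x
  proof -
    have c1: "1 / (1 + x^2) \<le> indicator {0..} x / (1 + x^2) + indicator {0..} (-x) / (1 + (-x)^2)"
      by (auto split: split_indicator simp: add_pos_nonneg)
    have "norm (GG lam x) \<le> (2*B + 2*C) / (1 + x^2)"
    proof (cases "\<bar>x\<bar> \<le> 1")
      case True
      have "x^2 \<le> 1" using True by (simp add: abs_square_le_1)
      then have "B * x^2 \<le> B * 1" using B(1) by (intro mult_left_mono) auto
      then have "B \<le> 2 * B / (1 + x^2)" using B(1) by (simp add: field_simps add_pos_nonneg)
      also have "\<dots> \<le> (2*B + 2*C) / (1 + x^2)" using C(1) by (simp add: divide_right_mono add_pos_nonneg)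
      finally show ?thesis using B(2)[of x] by linarith
    next
      case False
      then have x0: "x \<noteq> 0" by auto
      have x1: "1 \<le> x^2" using False abs_square_less_1[of x] by linarith
      have m: "C * (1 + x^2) \<le> 2 * C * x^2" using mult_left_mono[OF x1 C(1)] by (simp add: algebra_simps)
      have xp: "x^2 > 0" using x0 by simp
      have "C / x^2 \<le> 2 * C / (1 + x^2)" using m xp by (simp add: divide_le_eq le_divide_eq add_pos_nonneg mult.commute)
      also have "\<dots> \<le> (2*B + 2*C) / (1 + x^2)" using B(1) by (simp add: divide_right_mono add_pos_nonneg)
      finally show ?thesis using C(2)[OF x0] by linarith
    qed
    also have "\<dots> = (2*B + 2*C) * (1 / (1 + x^2))" by simp
    also have "\<dots> \<le> w x" unfolding w_def using B(1) C(1) c1 by (intro mult_left_mono) auto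
    also have "\<dots> \<le> norm (w x)" by simp
    finally show ?thesis .
  qed
  show ?thesis using bnd by (intro Bochner_Integration.integrable_bound[OF wi] AE_I2) auto
qed

lemma K_integrable: "lam > 0 \<Longrightarrow> integrable lborel (K lam)"
proof -
  assume lam: "lam > 0"
  have "integrable lborel (\<lambda>x. Re (GG lam x))" by (rule integrable_Re[OF GG_integrable[OF lam]])
  moreover have "AE x in lborel. Re (GG lam x) = K lam x" using AE_GG_K[OF lam] by eventually_elim simp
  ultimately show ?thesis using integrable_cong_AE[of "\<lambda>x. Re (GG lam x)" lborel "K lam"] K_meas[OF lam] by simp
qed

lemma Khat_GG:
  assumes lam: "lam > 0"
  shows "Khat lam t = (LINT x|lborel. GG lam x * iexp (- 2 * pi * t * x))"
proof -
  have e: "e (complex_of_real (- t * x)) = iexp (- 2 * pi * t * x)" for x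
    by (simp add: e_def algebra_simps)
  have "Khat lam t = (LINT x|lborel. complex_of_real (K lam x) * iexp (- 2 * pi * t * x))"
    unfolding Khat_def e ..
  also have "\<dots> = (LINT x|lborel. GG lam x * iexp (- 2 * pi * t * x))"
    using K_meas[OF lam] AE_GG_K[OF lam]
    by (intro integral_cong_AE) (auto elim!: eventually_mono)
  finally show ?thesis .
qed


lemma gauss_char: "(LINT y|lborel. std_normal_density y *\<^sub>R iexp (a * y)) = complex_of_real (exp (-(a^2)/2))"
proof -
  have "char std_normal_distribution a = complex_of_real (exp (-(a^2)/2))"
    by (simp add: char_std_normal_distribution)
  moreover have "char std_normal_distribution a = (LINT y|lborel. std_normal_density y *\<^sub>R iexp (a * y))"
    unfolding char_def by (rule integral_density) auto
  ultimately show ?thesis by simp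
qed

lemma gauss_ft:
  fixes \<epsilon> u :: real
  assumes ep: "\<epsilon> > 0"
  shows "(LINT x|lborel. iexp (u * x) * complex_of_real (exp (-((\<epsilon>*x)^2)/2)))
       = complex_of_real (sqrt (2*pi) / \<epsilon> * exp (-((u/\<epsilon>)^2)/2))"
proof -
  have "(LINT x|lborel. iexp (u * x) * complex_of_real (exp (-((\<epsilon>*x)^2)/2)))
      = \<bar>1/\<epsilon>\<bar> *\<^sub>R (LINT y|lborel. iexp (u * (0 + 1/\<epsilon> * y)) * complex_of_real (exp (-((\<epsilon>*(0 + 1/\<epsilon> * y))^2)/2)))"
    by (rule lborel_integral_real_affine) (use ep in simp)
  also have "(\<lambda>y. iexp (u * (0 + 1/\<epsilon> * y)) * complex_of_real (exp (-((\<epsilon>*(0 + 1/\<epsilon> * y))^2)/2)))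
      = (\<lambda>y. sqrt (2*pi) *\<^sub>R (std_normal_density y *\<^sub>R iexp ((u/\<epsilon>) * y)))"
  proof
    fix y
    have "\<epsilon>*(0 + 1/\<epsilon> * y) = y" using ep by simp
    moreover have "u * (0 + 1/\<epsilon> * y) = (u/\<epsilon>) * y" by simp
    moreover have "sqrt (2*pi) * std_normal_density y = exp (-(y^2)/2)"
      by (simp add: std_normal_density_def)
    ultimately show "iexp (u * (0 + 1/\<epsilon> * y)) * complex_of_real (exp (-((\<epsilon>*(0 + 1/\<epsilon> * y))^2)/2))
      = sqrt (2*pi) *\<^sub>R (std_normal_density y *\<^sub>R iexp ((u/\<epsilon>) * y))"
      by (simp add: scaleR_conv_of_real mult.commute mult.left_commute flip: of_real_mult)
  qed
  also have "\<bar>1/\<epsilon>\<bar> *\<^sub>R (LINT y|lborel. sqrt (2*pi) *\<^sub>R (std_normal_density y *\<^sub>R iexp ((u/\<epsilon>) * y)))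
      = complex_of_real (sqrt (2*pi) / \<epsilon> * exp (-((u/\<epsilon>)^2)/2))"
    by (simp only: integral_scaleR_right gauss_char) (use ep in \<open>simp add: scaleR_conv_of_real\<close>)
  finally show ?thesis .
qed

lemma gauss_integrable: "(\<epsilon>::real) > 0 \<Longrightarrow> integrable lborel (\<lambda>x. exp (-((\<epsilon>*x)^2)/2))"
proof -
  assume ep: "\<epsilon> > 0"
  have "integrable lborel (\<lambda>y. sqrt (2*pi) * (std_normal_density y * y^0))"
    by (intro integrable_mult_right integrable_std_normal_moment)
  then have i: "integrable lborel (\<lambda>y::real. exp (-(y^2)/(2::real)))"
    by (simp add: std_normal_density_def)
  have "integrable lborel (\<lambda>x::real. exp (-((0 + \<epsilon>*x)^2)/(2::real)))"
    by (rule lborel_integrable_real_affine[OF i]) (use ep in simp)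
  then show ?thesis by simp
qed


definition ft :: "real \<Rightarrow> real \<Rightarrow> real" where
  "ft lam s = indicator {-1/2..1/2} s * FF lam s"

lemma ft_meas[measurable]: "ft lam \<in> borel_measurable borel"
  unfolding ft_def by measurable

lemma reg_eq:
  fixes \<epsilon> t :: real
  assumes lam: "lam > 0" and ep: "\<epsilon> > 0"
  shows "(LINT x|lborel. GG lam x * iexp (-2*pi*t*x) * complex_of_real (exp (-((\<epsilon>*x)^2)/2)))
    = complex_of_real (LINT s|lborel. ft lam s * (sqrt (2*pi) / \<epsilon> * exp (-((2*pi*(s-t)/\<epsilon>)^2)/2)))"
proof -
  define g where "g x = exp (-((\<epsilon>*x)^2)/2)" for x :: real
  define f where "f x s = indicator {-1/2..1/2::real} s *\<^sub>R (complex_of_real (FF lam s) * iexp (2*pi* s*x) * (iexp (-2*pi*t*x) * complex_of_real (g x)))" for x s :: real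
  have s1: "GG lam x * iexp (-2*pi*t*x) * complex_of_real (g x) = (\<integral>s. f x s \<partial>lborel)" for x
  proof -
    have "GG lam x * iexp (-2*pi*t*x) * complex_of_real (g x) =
      (\<integral>s. indicator {-1/2..1/2::real} s *\<^sub>R (complex_of_real (FF lam s) * iexp (2*pi* s*x)) \<partial>lborel) * (iexp (-2*pi*t*x) * complex_of_real (g x))"
      unfolding GG_def set_lebesgue_integral_def by (simp add: mult.assoc)
    also have "\<dots> = (\<integral>s. indicator {-1/2..1/2::real} s *\<^sub>R (complex_of_real (FF lam s) * iexp (2*pi* s*x)) * (iexp (-2*pi*t*x) * complex_of_real (g x)) \<partial>lborel)"
      by (rule integral_mult_left_zero[symmetric])
    also have "\<dots> = (\<integral>s. f x s \<partial>lborel)"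
      by (rule Bochner_Integration.integral_cong) (auto simp: f_def split: split_indicator)
    finally show ?thesis .
  qed
  have gi: "integrable lborel g" unfolding g_def by (rule gauss_integrable[OF ep])
  have nf: "norm (f x s) = indicator {-1/2..1/2::real} s * \<bar>FF lam s\<bar> * g x" for x s
    by (simp add: f_def norm_mult g_def split: split_indicator)
  have intF: "integrable (lborel \<Otimes>\<^sub>M lborel) (case_prod f)"
  proof (rule lborel_pair.Fubini_integrable)
    show "case_prod f \<in> borel_measurable (lborel \<Otimes>\<^sub>M lborel)"
      unfolding f_def g_def by measurable
    have ci: "integrable lborel (\<lambda>s. indicator {-1/2..1/2::real} s *\<^sub>R \<bar>FF lam s\<bar>)"
      by (intro borel_integrable_compact compact_Icc continuous_intros FF_cont[OF lam])
    have "(\<lambda>x. \<integral>s. norm (f x s) \<partial>lborel) = (\<lambda>x. (\<integral>s. indicator {-1/2..1/2::real} s *\<^sub>R \<bar>FF lam s\<bar> \<partial>lborel) * g x)"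
      by (rule ext) (simp add: nf)
    moreover have "integrable lborel (\<lambda>x. (\<integral>s. indicator {-1/2..1/2::real} s *\<^sub>R \<bar>FF lam s\<bar> \<partial>lborel) * g x)"
      by (intro integrable_mult_right gi)
    ultimately show "integrable lborel (\<lambda>x. \<integral>s. norm (case_prod f (x, s)) \<partial>lborel)" by simp
    show "AE x in lborel. integrable lborel (\<lambda>s. case_prod f (x, s))"
    proof (rule AE_I2)
      fix x
      have "integrable lborel (\<lambda>s. indicator {-1/2..1/2::real} s *\<^sub>R (complex_of_real (FF lam s) * iexp (2*pi* s*x) * (iexp (-2*pi*t*x) * complex_of_real (g x))))"
        by (intro borel_integrable_compact compact_Icc continuous_intros FF_cont[OF lam])
      then show "integrable lborel (\<lambda>s. case_prod f (x, s))" by (simp add: f_def)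
    qed
  qed
  have "(LINT x|lborel. GG lam x * iexp (-2*pi*t*x) * complex_of_real (exp (-((\<epsilon>*x)^2)/2)))
      = (\<integral>x. \<integral>s. f x s \<partial>lborel \<partial>lborel)"
    using s1 unfolding g_def by simp
  also have "\<dots> = (\<integral>s. \<integral>x. f x s \<partial>lborel \<partial>lborel)"
    by (rule lborel_pair.Fubini_integral[OF intF, symmetric])
  also have "\<dots> = (\<integral>s. complex_of_real (ft lam s * (sqrt (2*pi) / \<epsilon> * exp (-((2*pi*(s-t)/\<epsilon>)^2)/2))) \<partial>lborel)"
  proof (rule Bochner_Integration.integral_cong[OF refl])
    fix s
    have fe: "f x s = indicator {-1/2..1/2::real} s *\<^sub>R (complex_of_real (FF lam s) * (iexp ((2*pi*(s-t)) * x) * complex_of_real (g x)))" for x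
    proof -
      have "iexp (2*pi* s*x) * iexp (-2*pi*t*x) = iexp ((2*pi*(s-t)) * x)"
        by (simp add: exp_add[symmetric] algebra_simps)
      then show ?thesis unfolding f_def by (simp add: mult.assoc mult.left_commute)
    qed
    have "(\<integral>x. f x s \<partial>lborel) = indicator {-1/2..1/2::real} s *\<^sub>R (complex_of_real (FF lam s) * (\<integral>x. iexp ((2*pi*(s-t)) * x) * complex_of_real (g x) \<partial>lborel))"
      unfolding fe by simp
    also have "\<dots> = indicator {-1/2..1/2::real} s *\<^sub>R (complex_of_real (FF lam s) * complex_of_real (sqrt (2*pi) / \<epsilon> * exp (-((2*pi*(s-t)/\<epsilon>)^2)/2)))"
      unfolding g_def gauss_ft[OF ep] ..
    also have "\<dots> = complex_of_real (ft lam s * (sqrt (2*pi) / \<epsilon> * exp (-((2*pi*(s-t)/\<epsilon>)^2)/2)))"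
      by (simp add: ft_def scaleR_conv_of_real)
    finally show "(\<integral>x. f x s \<partial>lborel) = complex_of_real (ft lam s * (sqrt (2*pi) / \<epsilon> * exp (-((2*pi*(s-t)/\<epsilon>)^2)/2)))" .
  qed
  also have "\<dots> = complex_of_real (LINT s|lborel. ft lam s * (sqrt (2*pi) / \<epsilon> * exp (-((2*pi*(s-t)/\<epsilon>)^2)/2)))"
    by (rule integral_complex_of_real)
  finally show ?thesis .
qed

lemma reg_subst:
  fixes \<epsilon> t :: real
  assumes ep: "\<epsilon> > 0"
  shows "(LINT s|lborel. ft lam s * (sqrt (2*pi) / \<epsilon> * exp (-((2*pi*(s-t)/\<epsilon>)^2)/2)))
    = (LINT v|lborel. ft lam (t + \<epsilon>/(2*pi) * v) * std_normal_density v)"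
proof -
  have "(LINT s|lborel. ft lam s * (sqrt (2*pi) / \<epsilon> * exp (-((2*pi*(s-t)/\<epsilon>)^2)/2)))
    = \<bar>\<epsilon>/(2*pi)\<bar> *\<^sub>R (LINT v|lborel. ft lam (t + \<epsilon>/(2*pi) * v) * (sqrt (2*pi) / \<epsilon> * exp (-((2*pi*((t + \<epsilon>/(2*pi) * v)-t)/\<epsilon>)^2)/2)))"
    by (rule lborel_integral_real_affine) (use ep in simp)
  also have "\<dots> = (LINT v|lborel. \<bar>\<epsilon>/(2*pi)\<bar> * (ft lam (t + \<epsilon>/(2*pi) * v) * (sqrt (2*pi) / \<epsilon> * exp (-((2*pi*((t + \<epsilon>/(2*pi) * v)-t)/\<epsilon>)^2)/2))))"
    by simp
  also have "\<dots> = (LINT v|lborel. ft lam (t + \<epsilon>/(2*pi) * v) * std_normal_density v)"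
  proof (rule Bochner_Integration.integral_cong[OF refl])
    fix v
    have a: "2*pi*((t + \<epsilon>/(2*pi) * v)-t)/\<epsilon> = v" using ep by (simp add: field_simps)
    have b: "\<bar>\<epsilon>/(2*pi)\<bar> * (sqrt (2*pi) / \<epsilon>) = 1 / sqrt (2*pi)"
    proof -
      have "sqrt (2*pi) * sqrt (2*pi) = 2 * pi" by simp
      then show ?thesis using ep by (simp add: field_simps)
    qed
    show "\<bar>\<epsilon>/(2*pi)\<bar> * (ft lam (t + \<epsilon>/(2*pi) * v) * (sqrt (2*pi) / \<epsilon> * exp (-((2*pi*((t + \<epsilon>/(2*pi) * v)-t)/\<epsilon>)^2)/2)))
        = ft lam (t + \<epsilon>/(2*pi) * v) * std_normal_density v"
      unfolding a std_normal_density_def using b by (simp add: field_simps)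
  qed
  finally show ?thesis .
qed


lemma ft_clamp: "ft lam s = FF lam (max (-1/2) (min (1/2) s))"
proof -
  consider "s < -1/2" | "s \<in> {-1/2..1/2}" | "s > 1/2" by force
  then show ?thesis
  proof cases
    case 1 then have "max (-1/2) (min (1/2) s) = -1/2" "s \<notin> {-1/2..1/2}" by auto
    then show ?thesis by (simp only: ft_def FF_half) simp
  next
    case 2 then have "max (-1/2) (min (1/2) s) = s" by auto
    then show ?thesis using 2 by (simp add: ft_def)
  next
    case 3 then have "max (-1/2) (min (1/2) s) = 1/2" "s \<notin> {-1/2..1/2}" by auto
    then show ?thesis by (simp only: ft_def FF_half) simp
  qed
qed

lemma ft_cont: "lam > 0 \<Longrightarrow> isCont (ft lam) t"
proof -
  assume lam: "lam > 0"
  have "continuous_on UNIV (\<lambda>s. FF lam (max (-1/2) (min (1/2) s)))"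
    by (intro continuous_on_compose2[OF FF_cont[OF lam, of UNIV]] continuous_intros) auto
  then show ?thesis unfolding ft_clamp[abs_def] by (simp add: continuous_on_eq_continuous_at)
qed

lemma ft_bounded:
  assumes lam: "lam > 0"
  obtains M where "\<And>s. \<bar>ft lam s\<bar> \<le> M"
proof -
  have "bounded (FF lam ` {-1/2..1/2})"
    by (rule compact_imp_bounded[OF compact_continuous_image[OF FF_cont[OF lam] compact_Icc]])
  then obtain M where M': "\<forall>y\<in>FF lam ` {-1/2..1/2}. norm y \<le> M" unfolding bounded_iff by blast
  have "\<bar>ft lam s\<bar> \<le> M" for s
  proof (cases "s \<in> {-1/2..1/2}")
    case True then show ?thesis using M' by (auto simp: ft_def)
  next
    case False then show ?thesis using M' by (auto simp: ft_def intro: order_trans[OF _ M'[rule_format, of "FF lam 0"]])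
  qed
  then show ?thesis using that by blast
qed

lemma inversion:
  assumes lam: "lam > 0"
  shows "(LINT x|lborel. GG lam x * iexp (-2*pi*t*x)) = complex_of_real (ft lam t)"
proof -
  define ep where "ep n = inverse (real (Suc n))" for n
  have ep0: "ep n > 0" for n by (simp add: ep_def)
  have ep_lim: "ep \<longlonglongrightarrow> 0" unfolding ep_def by (rule LIMSEQ_inverse_real_of_nat)
  have A: "(\<lambda>n. LINT x|lborel. GG lam x * iexp (-2*pi*t*x) * complex_of_real (exp (-((ep n * x)^2)/2)))
      \<longlonglongrightarrow> (LINT x|lborel. GG lam x * iexp (-2*pi*t*x))"
  proof (rule integral_dominated_convergence[where w="\<lambda>x. norm (GG lam x)"])
    show "(\<lambda>x. GG lam x * iexp (-2*pi*t*x)) \<in> borel_measurable lborel" by measurable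
    show "(\<lambda>x. GG lam x * iexp (-2*pi*t*x) * complex_of_real (exp (-((ep n * x)^2)/2))) \<in> borel_measurable lborel" for n
      by measurable
    show "integrable lborel (\<lambda>x. norm (GG lam x))" by (rule integrable_norm[OF GG_integrable[OF lam]])
    show "AE x in lborel. (\<lambda>n. GG lam x * iexp (-2*pi*t*x) * complex_of_real (exp (-((ep n * x)^2)/2))) \<longlonglongrightarrow> GG lam x * iexp (-2*pi*t*x)"
    proof (rule AE_I2)
      fix x
      have "(\<lambda>n. exp (-((ep n * x)^2)/2)) \<longlonglongrightarrow> exp (-((0 * x)^2)/2)"
        by (intro tendsto_intros ep_lim) simp_all
      then have "(\<lambda>n. GG lam x * iexp (-2*pi*t*x) * complex_of_real (exp (-((ep n * x)^2)/2))) \<longlonglongrightarrow> GG lam x * iexp (-2*pi*t*x) * complex_of_real (exp (-((0 * x)^2)/2))"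
        by (intro tendsto_mult_left tendsto_of_real)
      then show "(\<lambda>n. GG lam x * iexp (-2*pi*t*x) * complex_of_real (exp (-((ep n * x)^2)/2))) \<longlonglongrightarrow> GG lam x * iexp (-2*pi*t*x)"
        by simp
    qed
    show "AE x in lborel. norm (GG lam x * iexp (-2*pi*t*x) * complex_of_real (exp (-((ep n * x)^2)/2))) \<le> norm (GG lam x)" for n
      by (intro AE_I2) (simp add: norm_mult mult_left_le)
  qed
  obtain M where M: "\<And>s. \<bar>ft lam s\<bar> \<le> M" using ft_bounded[OF lam] by blast
  have B: "(\<lambda>n. LINT v|lborel. ft lam (t + ep n/(2*pi) * v) * std_normal_density v) \<longlonglongrightarrow> (LINT v|lborel. ft lam t * std_normal_density v)"
  proof (rule integral_dominated_convergence[where w="\<lambda>v. M * std_normal_density v"])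
    show "(\<lambda>v. ft lam t * std_normal_density v) \<in> borel_measurable lborel" by measurable
    show "(\<lambda>v. ft lam (t + ep n/(2*pi) * v) * std_normal_density v) \<in> borel_measurable lborel" for n by measurable
    show "integrable lborel (\<lambda>v. M * std_normal_density v)"
      using integrable_std_normal_moment[of 0] by (intro integrable_mult_right) simp
    show "AE v in lborel. (\<lambda>n. ft lam (t + ep n/(2*pi) * v) * std_normal_density v) \<longlonglongrightarrow> ft lam t * std_normal_density v"
    proof (rule AE_I2)
      fix v
      have "(\<lambda>n. t + ep n/(2*pi) * v) \<longlonglongrightarrow> t + 0/(2*pi) * v" by (intro tendsto_intros ep_lim) simp
      then have "(\<lambda>n. t + ep n/(2*pi) * v) \<longlonglongrightarrow> t" by simp
      then have "(\<lambda>n. ft lam (t + ep n/(2*pi) * v)) \<longlonglongrightarrow> ft lam t"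
        by (rule isCont_tendsto_compose[OF ft_cont[OF lam]])
      then show "(\<lambda>n. ft lam (t + ep n/(2*pi) * v) * std_normal_density v) \<longlonglongrightarrow> ft lam t * std_normal_density v"
        by (intro tendsto_intros)
    qed
    show "AE v in lborel. norm (ft lam (t + ep n/(2*pi) * v) * std_normal_density v) \<le> M * std_normal_density v" for n
      by (intro AE_I2) (simp add: abs_mult mult_right_mono M)
  qed
  have B': "(LINT v|lborel. ft lam t * std_normal_density v) = ft lam t" by simp
  have C: "(\<lambda>n. LINT x|lborel. GG lam x * iexp (-2*pi*t*x) * complex_of_real (exp (-((ep n * x)^2)/2)))
     \<longlonglongrightarrow> complex_of_real (ft lam t)"
  proof -
    have "(\<lambda>n. complex_of_real (LINT v|lborel. ft lam (t + ep n/(2*pi) * v) * std_normal_density v)) \<longlonglongrightarrow> complex_of_real (ft lam t)"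
      using B unfolding B' by (rule tendsto_of_real)
    moreover have "(LINT x|lborel. GG lam x * iexp (-2*pi*t*x) * complex_of_real (exp (-((ep n * x)^2)/2)))
      = complex_of_real (LINT v|lborel. ft lam (t + ep n/(2*pi) * v) * std_normal_density v)" for n
      unfolding reg_eq[OF lam ep0] reg_subst[OF ep0] ..
    ultimately show ?thesis by simp
  qed
  show ?thesis using LIMSEQ_unique[OF A C] .
qed

theorem lemma4p2:
  fixes lam :: real
  assumes "lam > 0"
  shows "(\<forall>t::real. \<bar>t\<bar> \<le> 1/2 \<longrightarrow>
            Khat lam t = complex_of_real
              (sinh (lam/2) * cos (pi * t) / ((sinh (lam/2))\<^sup>2 + (sin (pi * t))\<^sup>2)))
         \<and> (\<forall>t::real. Khat lam t \<in> \<real> \<and> 0 \<le> Re (Khat lam t))"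
proof -
  have kh: "Khat lam t = complex_of_real (ft lam t)" for t
    using Khat_GG[OF assms] inversion[OF assms] by simp
  have nn: "0 \<le> ft lam t" for t
  proof (cases "t \<in> {-1/2..1/2}")
    case True
    have t1: "-1/2 \<le> t" and t2: "t \<le> 1/2" using True by auto
    have "pi * (-1/2) \<le> pi * t" by (rule mult_left_mono[OF t1]) simp
    moreover have "pi * t \<le> pi * (1/2)" by (rule mult_left_mono[OF t2]) simp
    ultimately have "- (pi/2) \<le> pi * t" "pi * t \<le> pi/2" by simp_all
    then have c: "0 \<le> cos (pi * t)" by (rule cos_ge_zero)
    have s: "0 < sinh (lam/2)" using assms by simp
    have d: "0 < (sinh (lam/2))^2 + (sin (pi * t))^2" using FF_den_pos[OF assms] .
    show ?thesis using True c s d by (simp add: ft_def FF_def)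
  next
    case False then show ?thesis by (simp add: ft_def)
  qed
  show ?thesis
  proof (intro conjI allI impI)
    fix t :: real assume "\<bar>t\<bar> \<le> 1/2"
    then have "t \<in> {-1/2..1/2}" by auto
    then show "Khat lam t = complex_of_real
              (sinh (lam/2) * cos (pi * t) / ((sinh (lam/2))\<^sup>2 + (sin (pi * t))\<^sup>2))"
      by (simp add: kh ft_def FF_def)
  next
    fix t :: real
    show "Khat lam t \<in> \<real>" by (simp add: kh)
    show "0 \<le> Re (Khat lam t)" using nn[of t] by (simp add: kh)
  qed
qed

end
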